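(* Let $\mathrm{WCM}_N$ be the random directed multigraph on $[N]$ in which each vertex $i$ has exactly two out-going edges, pointing to $U_i^1$ and $U_i^2$, where $(U_i^1,U_i^2)_{i\in[N]}$ are $2N$ independent uniform random variables on $[N]$. Consider the simple symmetric random walk on $\mathrm{WCM}_N$, which from vertex $i$ moves along each of its two out-going edges with probability $1/2$. Then with high probability (as $N\to\infty$) this random walk has a unique stationary distribution, and this stationary distribution is supported on the largest strongly connected component of $\mathrm{WCM}_N$.
   Context: "With high probability" means with probability tending to $1$ as $N\to\infty$. A strongly connected component is a maximal vertex set in which any two vertices are joined by directed paths in both directions. *)

theory Defs
  imports "HOL-Probability.Probability"
begin

text \<open>Vertices are 0..N-1. A configuration U assigns to each vertex i the pair
  (U_i^1, U_i^2) of heads of its two out-going edges.\<close>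

definition wcm_space :: "nat \<Rightarrow> (nat \<Rightarrow> nat \<times> nat) set" where
  "wcm_space N = Pi\<^sub>E {..<N} (\<lambda>_. {..<N} \<times> {..<N})"

text \<open>The law of WCM_N: 2N independent uniform variables on [N].\<close>
definition WCM :: "nat \<Rightarrow> (nat \<Rightarrow> nat \<times> nat) pmf" where
  "WCM N = pmf_of_set (wcm_space N)"

definition wcm_edges :: "nat \<Rightarrow> (nat \<Rightarrow> nat \<times> nat) \<Rightarrow> (nat \<times> nat) set" where
  "wcm_edges N U = {(i, j). i < N \<and> j < N \<and> (fst (U i) = j \<or> snd (U i) = j)}"

definition reach :: "nat \<Rightarrow> (nat \<Rightarrow> nat \<times> nat) \<Rightarrow> nat \<Rightarrow> nat \<Rightarrow> bool" where
  "reach N U i j \<longleftrightarrow> (i, j) \<in> (wcm_edges N U)\<^sup>*"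

definition is_scc :: "nat \<Rightarrow> (nat \<Rightarrow> nat \<times> nat) \<Rightarrow> nat set \<Rightarrow> bool" where
  "is_scc N U C \<longleftrightarrow> C \<noteq> {} \<and> C \<subseteq> {..<N} \<and>
     (\<forall>i\<in>C. \<forall>j\<in>C. reach N U i j \<and> reach N U j i) \<and>
     (\<forall>D. D \<subseteq> {..<N} \<and> C \<subseteq> D \<and> (\<forall>i\<in>D. \<forall>j\<in>D. reach N U i j \<and> reach N U j i) \<longrightarrow> D = C)"

definition largest_scc :: "nat \<Rightarrow> (nat \<Rightarrow> nat \<times> nat) \<Rightarrow> nat set \<Rightarrow> bool" where
  "largest_scc N U C \<longleftrightarrow> is_scc N U C \<and> (\<forall>D. is_scc N U D \<and> D \<noteq> C \<longrightarrow> card D < card C)"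

text \<open>Transition kernel of the simple random walk (multi-edges and loops counted).\<close>
definition trans :: "(nat \<Rightarrow> nat \<times> nat) \<Rightarrow> nat \<Rightarrow> nat \<Rightarrow> real" where
  "trans U i j = (if fst (U i) = j then 1/2 else 0) + (if snd (U i) = j then 1/2 else 0)"

text \<open>Stationary distributions on [N], represented as functions vanishing outside [N].\<close>
definition stationary :: "nat \<Rightarrow> (nat \<Rightarrow> nat \<times> nat) \<Rightarrow> (nat \<Rightarrow> real) \<Rightarrow> bool" where
  "stationary N U \<pi> \<longleftrightarrow> (\<forall>i. \<pi> i \<ge> 0) \<and> (\<forall>i\<ge>N. \<pi> i = 0) \<and> (\<Sum>i<N. \<pi> i) = 1 \<and>
     (\<forall>j<N. (\<Sum>i<N. \<pi> i * trans U i j) = \<pi> j)"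

definition good_event :: "nat \<Rightarrow> (nat \<Rightarrow> nat \<times> nat) set" where
  "good_event N = {U. (\<exists>!\<pi>. stationary N U \<pi>) \<and>
     (\<exists>C. largest_scc N U C \<and> (\<forall>\<pi>. stationary N U \<pi> \<longrightarrow> (\<forall>i<N. \<pi> i \<noteq> 0 \<longrightarrow> i \<in> C)))}"

end

theory Submission
  imports Defs "HOL-Real_Asymp.Real_Asymp" "Jordan_Normal_Form.Determinant"
begin


definition aa :: "nat \<Rightarrow> nat \<Rightarrow> real" where
  "aa N k = real (N choose k) * (real k / real N)^(2*k)"

lemma bern2:
  fixes x :: real assumes "x \<ge> 0"
  shows "1 + real n * x + real n * (real n - 1) / 2 * x^2 \<le> (1+x)^n"
proof (induction n)
  case 0 then show ?case by simp
next
  case (Suc n)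
  have "1 + real (Suc n) * x + real (Suc n) * (real (Suc n) - 1) / 2 * x^2
        \<le> (1 + real n * x + real n * (real n - 1) / 2 * x^2) * (1+x)"
  proof -
    have h0: "real n * (real n - 1) \<ge> 0" by (cases n) auto
    have h: "0 \<le> real n*(real n - 1)/2 * x^3" using h0 assms by simp
    have e: "(1 + real n * x + real n * (real n - 1) / 2 * x^2) * (1+x) =
       1 + real (Suc n) * x + real (Suc n) * (real (Suc n) - 1) / 2 * x^2 + real n*(real n - 1)/2 * x^3"
      by (simp add: field_simps power2_eq_square power3_eq_cube)
    show ?thesis using h e by linarith
  qed
  also have "\<dots> \<le> (1+x)^n * (1+x)" using Suc assms by (intro mult_right_mono) auto
  finally show ?case by (simp add: mult.commute)
qed

lemma pow_ratio:
  assumes "k \<ge> 2" shows "(9/4) * real k ^ k \<le> (real k + 1)^k"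
proof -
  have kp: "real k > 0" using assms by simp
  have "1 + real k * (1/real k) + real k * (real k - 1) / 2 * (1/real k)^2 \<le> (1 + 1/real k)^k"
    by (rule bern2) simp
  moreover have "1 + real k * (1/real k) + real k * (real k - 1) / 2 * (1/real k)^2 = 2 + (real k - 1)/(2*real k)"
    using kp by (simp add: field_simps power2_eq_square)
  moreover have "(real k - 1)/(2*real k) \<ge> 1/4" using assms kp by (simp add: field_simps)
  ultimately have "9/4 \<le> (1 + 1/real k)^k" by linarith
  hence "9/4 * real k ^ k \<le> (1 + 1/real k)^k * real k ^ k" using kp by (intro mult_right_mono) auto
  also have "\<dots> = (real k + 1)^k" using kp
    by (simp add: power_mult_distrib[symmetric] field_simps)
  finally show ?thesis .
qed

lemma one_plus_pow_le3:
  assumes "k \<ge> 1" shows "(real k + 1)^k \<le> 3 * real k ^ k"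
proof -
  have kp: "real k > 0" using assms by simp
  have "(1 + 1/real k)^k \<le> exp (1/real k)^k"
    by (intro power_mono) (auto simp: exp_ge_add_one_self add.commute)
  also have "\<dots> = exp 1" using kp by (simp add: exp_of_nat_mult[symmetric])
  also have "\<dots> \<le> 3" using e_less_272 by simp
  finally have "(1 + 1/real k)^k * real k ^ k \<le> 3 * real k ^ k" using kp by (intro mult_right_mono) auto
  moreover have "(1 + 1/real k)^k * real k ^ k = (real k + 1)^k" using kp
    by (simp add: power_mult_distrib[symmetric] field_simps)
  ultimately show ?thesis by simp
qed

lemma fact_ge3: "(real k / 3)^k \<le> fact k"
proof (induction k)
  case 0 then show ?case by simp
next
  case (Suc k)
  have "(real (Suc k) / 3)^(Suc k) = (real k + 1)^k * (real k + 1) / 3^(Suc k)"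
    by (simp add: power_divide field_simps)
  also have "\<dots> \<le> 3 * real k ^ k * (real k + 1) / 3^(Suc k)"
  proof (cases "k = 0")
    case True then show ?thesis by simp
  next
    case False then show ?thesis
      using one_plus_pow_le3[of k] by (intro divide_right_mono mult_right_mono) auto
  qed
  also have "\<dots> = (real k / 3)^k * (real k + 1)" by (simp add: power_divide field_simps)
  also have "\<dots> \<le> fact k * (real k + 1)" using Suc by (intro mult_right_mono) auto
  also have "\<dots> = fact (Suc k)" by (simp add: algebra_simps)
  finally show ?case .
qed

lemma regionA:
  assumes "k \<ge> 1" "10*k \<le> 3*N"
  shows "aa N k \<le> 3 * real k / real N * (9/10)^(k-1)"
proof -
  have Np: "real N > 0" using assms by simp
  have kp: "real k > 0" using assms by simp
  have b: "real (N choose k) * fact k \<le> real N ^ k"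
    using binomial_fact_pow[of N k] by (metis of_nat_fact of_nat_le_iff of_nat_mult of_nat_power)
  have "real (N choose k) \<le> real N ^ k / fact k" using b by (simp add: field_simps)
  also have "\<dots> \<le> real N ^ k / (real k / 3)^k"
    using fact_ge3[of k] kp by (intro divide_left_mono) auto
  finally have c: "real (N choose k) \<le> real N ^ k / (real k / 3)^k" .
  have "aa N k \<le> real N ^ k / (real k / 3)^k * (real k / real N)^(2*k)"
    unfolding aa_def by (intro mult_right_mono c) auto
  also have "\<dots> = (3 * real k / real N)^k" using Np kp
    by (simp add: power_mult power2_eq_square power_divide power_mult_distrib field_simps)
  also have "\<dots> = (3 * real k / real N) * (3 * real k / real N)^(k-1)"
    using assms by (metis Suc_diff_le diff_Suc_1 power_Suc)
  also have "\<dots> \<le> (3 * real k / real N) * (9/10)^(k-1)"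
  proof -
    have "3 * real k / real N \<le> 9/10" using assms Np by (simp add: field_simps)
    thus ?thesis using Np kp by (intro mult_left_mono power_mono) auto
  qed
  finally show ?thesis .
qed

lemma lin_aux: "(x::real) \<le> y \<Longrightarrow> 21 * n \<le> 100 * x \<Longrightarrow> 0 \<le> n \<Longrightarrow> 106/100 * n \<le> 81/16 * y"
  by linarith

lemma ratio_step:
  assumes "2 \<le> k" "3*N \<le> 10*k" "2*(k+1) \<le> N"
  shows "(106/100) * aa N k \<le> aa N (k+1)"
proof -
  have Np: "real N > 0" and kp: "real k > 0" using assms by auto
  have kN: "k \<le> N" using assms by simp
  have bc: "real (Suc k) * real (N choose Suc k) = (real N - real k) * real (N choose k)"
  proof -
    have "Suc k * (N choose Suc k) = (N - k) * (N choose k)"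
      using binomial_absorption[of k N] binomial_absorb_comp[of N k] by simp
    hence "real (Suc k * (N choose Suc k)) = real ((N - k) * (N choose k))" by simp
    thus ?thesis using kN by (simp add: of_nat_diff algebra_simps)
  qed
  have pr: "(9/4) * real k ^ k \<le> (real k + 1)^k" using pow_ratio assms by simp
  have pr2: "(81/16) * real k ^ (2*k) \<le> (real k + 1)^(2*k)"
  proof -
    have "((9/4) * real k ^ k)^2 \<le> ((real k + 1)^k)^2"
      using pr kp by (intro power_mono) auto
    moreover have "((9/4) * real k ^ k)^2 = (81/16) * real k ^ (2*k)"
    proof -
      have "((9/4) * real k ^ k)^2 = (81/16) * (real k ^ k)^2" by (simp add: power2_eq_square)
      moreover have "(real k ^ k)^2 = real k ^ (2*k)" by (metis power_mult mult.commute)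
      ultimately show ?thesis by simp
    qed
    moreover have "((real k + 1)^k)^2 = (real k + 1)^(2*k)"
      by (simp add: power_mult[symmetric] mult.commute)
    ultimately show ?thesis by simp
  qed
  have quad: "100 * ((real N - real k) * real k) \<ge> 21 * real N ^ 2"
  proof -
    have "(10 * real k - 3 * real N) * (7 * real N - 10 * real k) \<ge> 0"
    proof -
      have h1: "3*real N \<le> 10*real k" using assms(2) by (metis of_nat_le_iff of_nat_mult of_nat_numeral)
      have "2*k \<le> N" using assms(3) by simp
      hence h2: "2*real k \<le> real N" by (metis of_nat_le_iff of_nat_mult of_nat_numeral)
      show ?thesis using h1 h2 by (intro mult_nonneg_nonneg) linarith+
    qed
    thus ?thesis by (simp add: algebra_simps power2_eq_square)
  qed
  have key: "(106/100) * real N ^ 2 * real k ^ (2*k) \<le> (real N - real k) * (real k + 1) * (real k + 1)^(2*k)"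
  proof -
    have "(106/100) * real N ^ 2 \<le> (81/16) * ((real N - real k) * (real k + 1))"
    proof -
      have "(real N - real k) * real k \<le> (real N - real k) * (real k + 1)"
        using kN by (intro mult_left_mono) auto
      thus ?thesis using lin_aux[OF _ quad] by (simp add: zero_le_power2)
    qed
    hence "(106/100) * real N ^ 2 * real k ^ (2*k) \<le> (81/16) * ((real N - real k) * (real k + 1)) * real k ^ (2*k)"
      by (intro mult_right_mono) auto
    also have "\<dots> = ((real N - real k) * (real k + 1)) * ((81/16) * real k ^ (2*k))" by simp
    also have "\<dots> \<le> ((real N - real k) * (real k + 1)) * (real k + 1)^(2*k)"
      using kN pr2 by (intro mult_left_mono) auto
    finally show ?thesis by simp
  qed
  have "(106/100) * aa N k * real (Suc k) * real N ^ (2*k+2)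
     = (106/100) * real N ^ 2 * real k ^ (2*k) * (real (N choose k) * (real k + 1))"
    unfolding aa_def using Np by (simp add: power_divide field_simps power_add power2_eq_square)
  also have "\<dots> \<le> (real N - real k) * (real k + 1) * (real k + 1)^(2*k) * (real (N choose k) * (real k + 1))"
    using key by (intro mult_right_mono) auto
  also have "\<dots> = ((real N - real k) * real (N choose k)) * (real k + 1)^(2*k+2)"
  proof -
    have p: "(real k + 1)^(2*k+2) = (real k+1)^(2*k) * (real k+1) * (real k + 1)"
      by (simp add: power_add power2_eq_square)
    show ?thesis unfolding p by (simp only: mult_ac)
  qed
  also have "\<dots> = real (Suc k) * real (N choose Suc k) * (real k + 1)^(2*k+2)"
    unfolding bc by simp
  also have "\<dots> = aa N (k+1) * real (Suc k) * real N ^ (2*k+2)"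
    unfolding aa_def using Np by (simp add: power_divide field_simps)
  finally have "(106/100) * aa N k * (real (Suc k) * real N ^ (2*k+2)) \<le> aa N (k+1) * (real (Suc k) * real N ^ (2*k+2))"
    by (simp add: mult.assoc)
  moreover have "real (Suc k) * real N ^ (2*k+2) > 0" using Np by simp
  ultimately show ?thesis by (rule mult_right_le_imp_le)
qed

lemma regionB:
  assumes "2 \<le> k" "3*N \<le> 10*k" "k \<le> N div 2"
  shows "aa N k \<le> aa N (N div 2) * (100/106)^(N div 2 - k)"
proof -
  have "\<forall>k. 2 \<le> k \<longrightarrow> 3*N \<le> 10*k \<longrightarrow> k \<le> N div 2 \<longrightarrow> N div 2 - k = d \<longrightarrow>
        aa N k \<le> aa N (N div 2) * (100/106)^d" for d
  proof (induction d)
    case 0 then show ?case by auto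
  next
    case (Suc d)
    show ?case
    proof (intro allI impI)
      fix k assume a: "2 \<le> k" "3*N \<le> 10*k" "k \<le> N div 2" "N div 2 - k = Suc d"
      have "(106/100) * aa N k \<le> aa N (k+1)" using a by (intro ratio_step) auto
      also have "\<dots> \<le> aa N (N div 2) * (100/106)^d" using Suc.IH a by auto
      finally show "aa N k \<le> aa N (N div 2) * (100/106)^Suc d" by simp
    qed
  qed
  thus ?thesis using assms by blast
qed

lemma central_sq: "real ((2*m) choose m)^2 * (3*real m + 1) \<le> 16^m"
proof (induction m)
  case 0 then show ?case by simp
next
  case (Suc m)
  have r1: "Suc m * (Suc (Suc (2*m)) choose Suc m) = Suc (Suc (2*m)) * (Suc (2*m) choose m)"
    by (rule Suc_times_binomial)
  have r2: "Suc m * (Suc (2*m) choose Suc m) = Suc (2*m) * ((2*m) choose m)"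
    by (rule Suc_times_binomial)
  have sym: "Suc (2*m) choose Suc m = Suc (2*m) choose m"
    using binomial_symmetric[of "Suc m" "Suc (2*m)"] by simp
  have rec: "real (Suc m) * real ((2*Suc m) choose Suc m) = 2 * (2*real m + 1) * real ((2*m) choose m)"
  proof -
    have a1: "real (Suc m) * real (Suc (Suc (2*m)) choose Suc m) = real (Suc (Suc (2*m))) * real (Suc (2*m) choose m)"
      using r1 by (metis of_nat_mult)
    have a2: "real (Suc m) * real (Suc (2*m) choose m) = real (Suc (2*m)) * real ((2*m) choose m)"
      using r2 sym by (metis of_nat_mult)
    have e: "real (Suc (Suc (2*m))) = real (Suc m) * 2" by simp
    have a4: "real (Suc m) * real (Suc (Suc (2*m)) choose Suc m) = real (Suc m) * (2 * real (Suc (2*m) choose m))"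
      using a1 unfolding e by (simp only: mult_ac)
    have a3: "real (Suc (Suc (2*m)) choose Suc m) = 2 * real (Suc (2*m) choose m)"
      using a4 by (subst (asm) mult_cancel_left) simp
    have "real (Suc m) * real ((2*Suc m) choose Suc m) = 2 * (real (Suc m) * real (Suc (2*m) choose m))"
      using a3 by simp
    also have "\<dots> = 2 * (2*real m + 1) * real ((2*m) choose m)" using a2 by simp
    finally show ?thesis .
  qed
  define c where "c = real ((2*m) choose m)"
  define c' where "c' = real ((2*Suc m) choose Suc m)"
  have rec': "c' = 2 * (2*real m + 1) * c / (real m + 1)" using rec unfolding c_def c'_def
    by (simp add: field_simps)
  have "c'^2 * (3 * real (Suc m) + 1) = 4 * (2*real m+1)^2 * (3*real m + 4) / (real m+1)^2 * c^2"
    unfolding rec' by (simp add: field_simps power2_eq_square)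
  also have "\<dots> \<le> 16 * (3*real m + 1) * c^2"
  proof -
    have "4 * (2*real m+1)^2 * (3*real m + 4) \<le> 16 * (3*real m + 1) * (real m+1)^2"
      by (simp add: algebra_simps power2_eq_square)
    hence "4 * (2*real m+1)^2 * (3*real m + 4) / (real m+1)^2 \<le> 16 * (3*real m + 1)"
      by (simp add: divide_le_eq)
    thus ?thesis by (intro mult_right_mono) auto
  qed
  also have "\<dots> \<le> 16 * 16^m" using Suc.IH unfolding c_def by (simp add: algebra_simps)
  finally show ?case unfolding c'_def by simp
qed

lemma central_bound: "real ((2*m) choose m) / 4^m \<le> 1 / sqrt (3*real m + 1)"
proof -
  have "(real ((2*m) choose m) * sqrt (3*real m + 1))^2 \<le> (4^m)^2"
  proof -
    have "(real ((2*m) choose m) * sqrt (3*real m + 1))^2 = real ((2*m) choose m)^2 * (3*real m + 1)"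
      by (simp add: power_mult_distrib)
    moreover have "((4::real)^m)^2 = 16^m"
    proof -
      have "((4::real)^m)^2 = 4^(m*2)" by (metis power_mult)
      also have "\<dots> = (4^2)^m" by (metis power_mult mult.commute)
      finally show ?thesis by simp
    qed
    ultimately show ?thesis using central_sq[of m] by simp
  qed
  hence "real ((2*m) choose m) * sqrt (3*real m + 1) \<le> 4^m"
    by (rule power2_le_imp_le) simp
  thus ?thesis by (simp add: field_simps)
qed

lemma aaM_bound:
  assumes "N \<ge> 1"
  shows "aa N (N div 2) \<le> 2 / sqrt (3*real (N div 2) + 1)"
proof -
  define m where "m = N div 2"
  have sp: "sqrt (3*real m + 1) > 0" by simp
  have c: "real ((2*m) choose m) / 4^m \<le> 1 / sqrt (3*real m + 1)" by (rule central_bound)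
  show ?thesis
  proof (cases "even N")
    case True
    hence N: "N = 2*m" unfolding m_def by simp
    have "aa N m = real ((2*m) choose m) / 4^m"
      unfolding aa_def N using assms N
      by (simp add: power_mult power_divide field_simps power2_eq_square power_mult_distrib[symmetric])
    also have "\<dots> \<le> 1 / sqrt (3*real m + 1)" by (rule c)
    also have "\<dots> \<le> 2 / sqrt (3*real m + 1)" using sp by (simp add: divide_right_mono)
    finally show ?thesis unfolding m_def by simp
  next
    case False
    hence N: "N = Suc (2*m)" unfolding m_def by presburger
    have r2: "Suc m * (Suc (2*m) choose Suc m) = Suc (2*m) * ((2*m) choose m)"
      by (rule Suc_times_binomial)
    have sym: "Suc (2*m) choose Suc m = Suc (2*m) choose m"
      using binomial_symmetric[of "Suc m" "Suc (2*m)"] by simp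
    have b: "real (Suc (2*m) choose m) \<le> 2 * real ((2*m) choose m)"
    proof -
      have "real (Suc m) * real (Suc (2*m) choose m) = real (Suc (2*m)) * real ((2*m) choose m)"
        using r2 sym by (metis of_nat_mult)
      also have "\<dots> \<le> real (Suc m) * (2 * real ((2*m) choose m))" by simp
      finally show ?thesis by (simp add: mult_le_cancel_left)
    qed
    have p: "(real m / real (Suc (2*m)))^(2*m) \<le> (1/2)^(2*m)"
      by (intro power_mono) (auto simp: field_simps)
    have "aa N m = real (Suc (2*m) choose m) * (real m / real (Suc (2*m)))^(2*m)"
      unfolding aa_def N by simp
    also have "\<dots> \<le> (2 * real ((2*m) choose m)) * (1/2)^(2*m)"
      using b p by (intro mult_mono) auto
    also have "\<dots> = 2 * (real ((2*m) choose m) / 4^m)"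
      by (simp add: power_mult power_divide)
    also have "\<dots> \<le> 2 * (1 / sqrt (3*real m + 1))" using c by simp
    finally show ?thesis unfolding m_def by simp
  qed
qed

lemma sum_kq:
  fixes q :: real assumes "0 \<le> q" "q < 1"
  shows "(\<Sum>k<n. real (k+1) * q^k) \<le> 1 / (1-q)^2"
proof -
  have e: "(\<Sum>k<n. real (k+1) * q^k) * (1-q)^2 = 1 - real (n+1) * q^n + real n * q^(n+1)" for n
    by (induction n) (simp_all add: algebra_simps power2_eq_square)
  have "real n * q^(n+1) \<le> real (n+1) * q^n"
  proof -
    have "real n * q^(n+1) = (real n * q) * q^n" by simp
    also have "\<dots> \<le> real (n+1) * q^n"
    proof -
      have "real n * q \<le> real n" using assms by (simp add: mult_left_le)
      thus ?thesis using assms by (intro mult_right_mono) auto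
    qed
    finally show ?thesis .
  qed
  hence "(\<Sum>k<n. real (k+1) * q^k) * (1-q)^2 \<le> 1" using e[of n] by simp
  moreover have "(1-q)^2 > 0" using assms by simp
  ultimately show ?thesis by (simp add: field_simps)
qed

lemma aa_nonneg: "aa N k \<ge> 0" unfolding aa_def by simp

lemma sum_aa_bound:
  assumes "N \<ge> 7"
  shows "(\<Sum>k\<in>{1..N div 2}. aa N k) \<le> 300 / real N + 36 / sqrt (real N)"
proof -
  define M where "M = N div 2"
  define r :: real where "r = 100/106"
  have Np: "real N > 0" using assms by simp
  have pt: "aa N k \<le> 3 * real k / real N * (9/10)^(k-1) + aa N M * r^(M-k)" if k: "k \<in> {1..M}" for k
  proof (cases "10*k \<le> 3*N")
    case True
    have "aa N k \<le> 3 * real k / real N * (9/10)^(k-1)" using k True by (intro regionA) auto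
    moreover have "aa N M * r^(M-k) \<ge> 0" using aa_nonneg unfolding r_def by simp
    ultimately show ?thesis by linarith
  next
    case False
    have "aa N k \<le> aa N M * r^(M-k)" unfolding M_def r_def using k False assms
      by (intro regionB) (auto simp: M_def)
    moreover have "3 * real k / real N * (9/10)^(k-1) \<ge> 0" by simp
    ultimately show ?thesis by linarith
  qed
  have "(\<Sum>k\<in>{1..M}. aa N k) \<le> (\<Sum>k\<in>{1..M}. 3 * real k / real N * (9/10)^(k-1) + aa N M * r^(M-k))"
    by (intro sum_mono pt)
  also have "\<dots> = 3 / real N * (\<Sum>k\<in>{1..M}. real k * (9/10)^(k-1)) + aa N M * (\<Sum>k\<in>{1..M}. r^(M-k))"
    unfolding sum.distrib sum_distrib_left by (intro arg_cong2[where f="(+)"] sum.cong) auto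
  finally have s0: "(\<Sum>k\<in>{1..M}. aa N k) \<le> 3 / real N * (\<Sum>k\<in>{1..M}. real k * (9/10)^(k-1)) + aa N M * (\<Sum>k\<in>{1..M}. r^(M-k))" .
  have "(\<Sum>k\<in>{1..M}. real k * (9/10::real)^(k-1)) = (\<Sum>k<M. real (k+1) * (9/10)^k)"
    using sum.atLeast1_atMost_eq[of "\<lambda>k. real k * (9/10::real)^(k-1)" M] by simp
  also have "\<dots> \<le> 100" using sum_kq[of "9/10" M] by (simp add: power2_eq_square)
  finally have s1: "(\<Sum>k\<in>{1..M}. real k * (9/10::real)^(k-1)) \<le> 100" .
  have "(\<Sum>k\<in>{1..M}. r^(M-k)) = (\<Sum>k<M. r^k)"
    using sum.atLeast1_atMost_eq[of "\<lambda>k. r^(M-k)" M] sum.nat_diff_reindex[of "\<lambda>k. r^k" M] by simp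
  also have "\<dots> \<le> 106/6" unfolding r_def by (simp add: sum_gp_strict)
  finally have s2: "(\<Sum>k\<in>{1..M}. r^(M-k)) \<le> 106/6" .
  have "3 / real N * (\<Sum>k\<in>{1..M}. real k * (9/10)^(k-1)) \<le> 3 / real N * 100"
    using s1 Np by (intro mult_left_mono) auto
  moreover have "aa N M * (\<Sum>k\<in>{1..M}. r^(M-k)) \<le> aa N M * (106/6)"
    using s2 aa_nonneg[of N M] by (intro mult_left_mono) auto
  ultimately have s: "(\<Sum>k\<in>{1..M}. aa N k) \<le> 3 / real N * 100 + aa N M * (106/6)"
    using s0 by linarith
  have "aa N M \<le> 2 / sqrt (3*real M + 1)" unfolding M_def using assms by (intro aaM_bound) auto
  also have "\<dots> \<le> 2 / sqrt (real N)"
  proof -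
    have "real N \<le> 3*real M + 1" unfolding M_def by linarith
    thus ?thesis using Np by (intro divide_left_mono mult_pos_pos) auto
  qed
  finally have "aa N M * (106/6) \<le> 2 / sqrt (real N) * (106/6)" by (intro mult_right_mono) auto
  also have "\<dots> \<le> 36 / sqrt (real N)" using Np by (simp add: field_simps)
  finally show ?thesis using s unfolding M_def by simp
qed

lemma bound_lim: "(\<lambda>N. 300 / real N + 36 / sqrt (real N)) \<longlonglongrightarrow> 0"
  by real_asymp




definition closedS :: "(nat \<Rightarrow> nat \<times> nat) \<Rightarrow> nat set \<Rightarrow> bool" where
  "closedS U S \<longleftrightarrow> (\<forall>i\<in>S. fst (U i) \<in> S \<and> snd (U i) \<in> S)"

definition bad :: "nat \<Rightarrow> (nat \<Rightarrow> nat \<times> nat) set" where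
  "bad N = {U. \<exists>S. S \<subseteq> {..<N} \<and> S \<noteq> {} \<and> 2 * card S \<le> N \<and> closedS U S}"

lemma space_fin: "finite (wcm_space N)"
  unfolding wcm_space_def by (intro finite_PiE) auto

lemma space_ne: "wcm_space N \<noteq> {}"
  unfolding wcm_space_def by (cases N) (auto simp: PiE_eq_empty_iff)

lemma card_space: "card (wcm_space N) = (N*N)^N"
  unfolding wcm_space_def by (simp add: card_PiE card_cartesian_product)

lemma prob_WCM: "measure_pmf.prob (WCM N) A = card (wcm_space N \<inter> A) / card (wcm_space N)"
  unfolding WCM_def by (rule measure_pmf_of_set[OF space_ne space_fin])

lemma closed_prob:
  assumes S: "S \<subseteq> {..<N}" and N: "N > 0"
  shows "measure_pmf.prob (WCM N) {U. closedS U S} = (real (card S) / real N)^(2*card S)"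
proof -
  have fS: "finite S" using S finite_subset by blast
  have eq: "wcm_space N \<inter> {U. closedS U S} = Pi\<^sub>E {..<N} (\<lambda>i. if i \<in> S then S \<times> S else {..<N} \<times> {..<N})"
    using S unfolding wcm_space_def closedS_def
    by (auto simp: PiE_iff mem_Times_iff split: if_splits) (metis lessThan_iff subsetD prod.collapse)+
  have "card (wcm_space N \<inter> {U. closedS U S}) = (\<Prod>i<N. if i \<in> S then card S * card S else N * N)"
    unfolding eq by (simp add: card_PiE card_cartesian_product if_distrib cong: if_cong)
  also have "\<dots> = (card S * card S)^card S * (N*N)^(N - card S)"
  proof -
    have a: "{..<N} \<inter> S = S" using S by auto
    have b: "card ({..<N} \<inter> - S) = N - card S"
    proof -
      have "{..<N} \<inter> - S = {..<N} - S" by auto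
      thus ?thesis using S fS by (simp add: card_Diff_subset)
    qed
    show ?thesis by (simp add: prod.If_cases) (simp only: a b)
  qed
  finally have c: "card (wcm_space N \<inter> {U. closedS U S}) = (card S * card S)^card S * (N*N)^(N - card S)" .
  have kN: "card S \<le> N" using S by (metis card_lessThan card_mono finite_lessThan)
  have "real ((N*N)^N) = real ((N*N)^(N - card S)) * real ((N*N)^card S)"
    using kN by (simp flip: power_add of_nat_mult of_nat_power)
  hence "measure_pmf.prob (WCM N) {U. closedS U S} = real ((card S * card S)^card S) / real ((N*N)^card S)"
    unfolding prob_WCM c card_space using N by (simp add: field_simps)
  also have "\<dots> = (real (card S) / real N)^(2*card S)"
    by (simp add: power_mult power_divide power2_eq_square mult.commute power_mult_distrib)
  finally show ?thesis .
qed

lemma bad_bound: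
  assumes N: "N > 0"
  shows "measure_pmf.prob (WCM N) (bad N) \<le> (\<Sum>k\<in>{1..N div 2}. aa N k)"
proof -
  define SS where "SS = {S. S \<subseteq> {..<N} \<and> S \<noteq> {} \<and> 2 * card S \<le> N}"
  have fSS: "finite SS" unfolding SS_def
    by (rule finite_subset[of _ "Pow {..<N}"]) auto
  have "bad N = (\<Union>S\<in>SS. {U. closedS U S})" unfolding bad_def SS_def by auto
  hence "measure_pmf.prob (WCM N) (bad N) \<le> (\<Sum>S\<in>SS. measure_pmf.prob (WCM N) {U. closedS U S})"
    using measure_pmf.finite_measure_subadditive_finite[OF fSS, of "\<lambda>S. {U. closedS U S}" "WCM N"] by simp
  also have "\<dots> = (\<Sum>S\<in>SS. (real (card S) / real N)^(2*card S))"
    by (intro sum.cong refl closed_prob N) (auto simp: SS_def)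
  also have "\<dots> = (\<Sum>k\<in>{1..N div 2}. \<Sum>S\<in>{S. S \<in> SS \<and> card S = k}. (real (card S) / real N)^(2*card S))"
  proof (rule sum.group[symmetric, OF fSS])
    show "finite {1..N div 2}" by simp
    show "card ` SS \<subseteq> {1..N div 2}"
    proof
      fix k assume "k \<in> card ` SS"
      then obtain S where S: "S \<in> SS" "k = card S" by auto
      have "finite S" using S(1) unfolding SS_def using finite_subset by blast
      thus "k \<in> {1..N div 2}" using S unfolding SS_def by (auto simp: card_gt_0_iff Suc_le_eq)
    qed
  qed
  also have "\<dots> = (\<Sum>k\<in>{1..N div 2}. aa N k)"
  proof (intro sum.cong refl)
    fix k assume k: "k \<in> {1..N div 2}"
    have e: "{S. S \<in> SS \<and> card S = k} = {S. S \<subseteq> {..<N} \<and> card S = k}"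
      using k unfolding SS_def by auto
    have "(\<Sum>S\<in>{S. S \<in> SS \<and> card S = k}. (real (card S) / real N)^(2*card S))
        = (\<Sum>S\<in>{S. S \<subseteq> {..<N} \<and> card S = k}. (real k / real N)^(2*k))"
      unfolding e by (intro sum.cong) auto
    also have "\<dots> = real (N choose k) * (real k / real N)^(2*k)"
      using n_subsets[of "{..<N}" k] by simp
    finally show "(\<Sum>S\<in>{S. S \<in> SS \<and> card S = k}. (real (card S) / real N)^(2*card S)) = aa N k"
      unfolding aa_def .
  qed
  finally show ?thesis .
qed




lemma kernel_exists:
  fixes M :: "nat \<Rightarrow> nat \<Rightarrow> real"
  assumes N: "N > 0" and rows: "\<And>i. i < N \<Longrightarrow> (\<Sum>j<N. M i j) = 1"
  shows "\<exists>x. (\<exists>i<N. x i \<noteq> 0) \<and> (\<forall>j<N. (\<Sum>i<N. x i * M i j) = x j)"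
proof -
  define A :: "real mat" where "A = mat N N (\<lambda>(i,j). M i j - (if i = j then 1 else 0))"
  have Ac: "A \<in> carrier_mat N N" unfolding A_def by simp
  define one :: "real vec" where "one = vec N (\<lambda>_. 1)"
  have onec: "one \<in> carrier_vec N" unfolding one_def by simp
  have one_ne: "one \<noteq> 0\<^sub>v N"
  proof
    assume "one = 0\<^sub>v N"
    hence "vec_index one 0 = vec_index (0\<^sub>v N) 0" by simp
    thus False using N unfolding one_def by simp
  qed
  have "A *\<^sub>v one = 0\<^sub>v N"
  proof (rule eq_vecI)
    show "dim_vec (A *\<^sub>v one) = dim_vec (0\<^sub>v N)" unfolding A_def by simp
    fix i assume "i < dim_vec (0\<^sub>v N)"
    hence i: "i < N" by simp
    have "vec_index (A *\<^sub>v one) i = (\<Sum>j\<in>{0..<N}. (M i j - (if i = j then 1 else 0)))"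
      using i unfolding A_def one_def by (simp add: scalar_prod_def)
    also have "\<dots> = (\<Sum>j<N. M i j) - (\<Sum>j\<in>{0..<N}. (if i = j then 1 else 0))"
      by (simp add: sum_subtractf lessThan_atLeast0)
    also have "\<dots> = 0" using rows[OF i] i by simp
    finally show "vec_index (A *\<^sub>v one) i = vec_index (0\<^sub>v N) i" using i by simp
  qed
  hence "det A = 0" using det_0_iff_vec_prod_zero[OF Ac] onec one_ne by blast
  hence "det (transpose_mat A) = 0" using det_transpose[OF Ac] by simp
  moreover have "transpose_mat A \<in> carrier_mat N N" using Ac by simp
  ultimately obtain w where w: "w \<in> carrier_vec N" "w \<noteq> 0\<^sub>v N" "transpose_mat A *\<^sub>v w = 0\<^sub>v N"
    using det_0_iff_vec_prod_zero by blast
  define x where "x i = (if i < N then vec_index w i else 0)" for i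
  have "\<exists>i<N. x i \<noteq> 0"
  proof (rule ccontr)
    assume "\<not> ?thesis"
    hence "w = 0\<^sub>v N" using w(1) unfolding x_def by (intro eq_vecI) auto
    thus False using w(2) by simp
  qed
  moreover have "\<forall>j<N. (\<Sum>i<N. x i * M i j) = x j"
  proof (intro allI impI)
    fix j assume j: "j < N"
    have "0 = vec_index (transpose_mat A *\<^sub>v w) j" using w(3) j by simp
    also have "\<dots> = (\<Sum>i\<in>{0..<N}. (M i j - (if i = j then 1 else 0)) * vec_index w i)"
      using j w(1) unfolding A_def by (simp add: scalar_prod_def)
    also have "\<dots> = (\<Sum>i\<in>{0..<N}. M i j * vec_index w i) - (\<Sum>i\<in>{0..<N}. (if i = j then vec_index w i else 0))"
      unfolding sum_subtractf[symmetric] by (intro sum.cong) (auto simp: algebra_simps)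
    also have "\<dots> = (\<Sum>i<N. x i * M i j) - x j"
    proof -
      have "(\<Sum>i\<in>{0..<N}. M i j * vec_index w i) = (\<Sum>i<N. x i * M i j)"
        unfolding x_def lessThan_atLeast0 by (intro sum.cong) auto
      thus ?thesis using j unfolding x_def by simp
    qed
    finally show "(\<Sum>i<N. x i * M i j) = x j" by simp
  qed
  ultimately show ?thesis by blast
qed




lemma sum_trans:
  assumes "finite A"
  shows "(\<Sum>j\<in>A. trans U i j) = (if fst (U i) \<in> A then 1/2 else 0) + (if snd (U i) \<in> A then 1/2 else 0)"
  unfolding trans_def sum.distrib using assms by (simp add: sum.delta')

lemma trans_nonneg: "trans U i j \<ge> 0" unfolding trans_def by simp

context
  fixes N :: nat and U :: "nat \<Rightarrow> nat \<times> nat"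
  assumes sp: "U \<in> wcm_space N"
begin

lemma in_sp: "i < N \<Longrightarrow> fst (U i) < N \<and> snd (U i) < N"
  using sp unfolding wcm_space_def by (auto simp: PiE_iff mem_Times_iff)

lemma rows1: "i < N \<Longrightarrow> (\<Sum>j<N. trans U i j) = 1"
  using in_sp[of i] by (simp add: sum_trans)

lemma reach_fst: "i < N \<Longrightarrow> reach N U i (fst (U i))"
  using in_sp[of i] unfolding reach_def wcm_edges_def by (intro r_into_rtrancl) auto

lemma reach_snd: "i < N \<Longrightarrow> reach N U i (snd (U i))"
  using in_sp[of i] unfolding reach_def wcm_edges_def by (intro r_into_rtrancl) auto

lemma reach_trans: "reach N U i j \<Longrightarrow> reach N U j k \<Longrightarrow> reach N U i k"
  unfolding reach_def by (rule rtrancl_trans)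

lemma reach_refl: "reach N U i i" unfolding reach_def by simp

lemma reach_closed:
  assumes "closedS U S" "reach N U i j" "i \<in> S" shows "j \<in> S"
  using assms(2,3) unfolding reach_def
proof (induction rule: rtrancl_induct)
  case base then show ?case .
next
  case (step y z)
  then show ?case using assms(1) unfolding closedS_def wcm_edges_def by auto
qed

lemma reach_lt:
  assumes "reach N U i j" "i < N" shows "j < N"
  using assms unfolding reach_def
proof (induction rule: rtrancl_induct)
  case base then show ?case .
next
  case (step y z) then show ?case unfolding wcm_edges_def by auto
qed

definition RS :: "nat \<Rightarrow> nat set" where "RS i = {j. reach N U i j}"

lemma RS_props:
  assumes "i < N"
  shows "RS i \<subseteq> {..<N}" "i \<in> RS i" "closedS U (RS i)"
proof -
  show "RS i \<subseteq> {..<N}" using reach_lt assms unfolding RS_def by auto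
  show "i \<in> RS i" unfolding RS_def using reach_refl by simp
  show "closedS U (RS i)" unfolding closedS_def RS_def
  proof (intro ballI conjI; simp)
    fix j assume j: "reach N U i j"
    hence jN: "j < N" using reach_lt assms by blast
    show "reach N U i (fst (U j))" using reach_trans[OF j reach_fst[OF jN]] .
    show "reach N U i (snd (U j))" using reach_trans[OF j reach_snd[OF jN]] .
  qed
qed

lemma supp_closed:
  fixes \<rho> :: "nat \<Rightarrow> real"
  assumes nn: "\<And>i. \<rho> i \<ge> 0" and eq: "\<And>j. j < N \<Longrightarrow> (\<Sum>i<N. \<rho> i * trans U i j) = \<rho> j"
  shows "closedS U {i. i < N \<and> \<rho> i > 0}"
  unfolding closedS_def
proof (intro ballI)
  fix i assume "i \<in> {i. i < N \<and> \<rho> i > 0}"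
  hence i: "i < N" "\<rho> i > 0" by auto
  have pos: "\<rho> j > 0" if j: "j < N" and t: "trans U i j \<ge> 1/2" for j
  proof -
    have "\<rho> i * (1/2) \<le> \<rho> i * trans U i j" using i t by (intro mult_left_mono) auto
    also have "\<dots> \<le> (\<Sum>i<N. \<rho> i * trans U i j)"
      using i nn trans_nonneg by (intro member_le_sum) auto
    also have "\<dots> = \<rho> j" using eq j by simp
    finally show ?thesis using i by simp
  qed
  have "trans U i (fst (U i)) \<ge> 1/2" "trans U i (snd (U i)) \<ge> 1/2" unfolding trans_def by auto
  thus "fst (U i) \<in> {i. i < N \<and> \<rho> i > 0} \<and> snd (U i) \<in> {i. i < N \<and> \<rho> i > 0}"
    using pos in_sp[OF i(1)] by auto
qed

end




context
  fixes N :: nat and U :: "nat \<Rightarrow> nat \<times> nat"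
  assumes sp: "U \<in> wcm_space N"
  and H: "\<And>S. S \<subseteq> {..<N} \<Longrightarrow> S \<noteq> {} \<Longrightarrow> closedS U S \<Longrightarrow> N < 2 * card S"
  and Npos: "N > 0"
begin

lemma closed_inter:
  assumes "S \<subseteq> {..<N}" "S \<noteq> {}" "closedS U S" "T \<subseteq> {..<N}" "T \<noteq> {}" "closedS U T"
  shows "S \<inter> T \<noteq> {}"
proof
  assume e: "S \<inter> T = {}"
  have fS: "finite S" "finite T" using assms finite_subset by blast+
  have "card (S \<union> T) \<le> N" using assms by (metis card_lessThan card_mono finite_lessThan Un_least)
  moreover have "card (S \<union> T) = card S + card T" using e fS by (simp add: card_Un_disjoint)
  moreover have "N < 2 * card S" "N < 2 * card T" using H assms by auto
  ultimately show False by linarith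
qed

lemma exC: "\<exists>C. C \<subseteq> {..<N} \<and> C \<noteq> {} \<and> closedS U C \<and>
   (\<forall>S. S \<subseteq> {..<N} \<and> S \<noteq> {} \<and> closedS U S \<longrightarrow> card C \<le> card S)"
proof -
  have "{..<N} \<subseteq> {..<N} \<and> {..<N} \<noteq> {} \<and> closedS U {..<N}"
    using Npos in_sp[OF sp] unfolding closedS_def by auto
  from ex_has_least_nat[where P = "\<lambda>S. S \<subseteq> {..<N} \<and> S \<noteq> {} \<and> closedS U S" and m = card, OF this]
  show ?thesis by (simp only: conj_assoc)
qed

definition CC :: "nat set" where
  "CC = (SOME C. C \<subseteq> {..<N} \<and> C \<noteq> {} \<and> closedS U C \<and>
   (\<forall>S. S \<subseteq> {..<N} \<and> S \<noteq> {} \<and> closedS U S \<longrightarrow> card C \<le> card S))"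

lemma CC_props: "CC \<subseteq> {..<N}" "CC \<noteq> {}" "closedS U CC"
  "\<And>S. S \<subseteq> {..<N} \<Longrightarrow> S \<noteq> {} \<Longrightarrow> closedS U S \<Longrightarrow> card CC \<le> card S"
  using someI_ex[OF exC] unfolding CC_def by blast+

lemma CC_sub: assumes "S \<subseteq> {..<N}" "S \<noteq> {}" "closedS U S" shows "CC \<subseteq> S"
proof -
  have ne: "S \<inter> CC \<noteq> {}" using closed_inter assms CC_props by blast
  have cl: "closedS U (S \<inter> CC)" using assms(3) CC_props(3) unfolding closedS_def by auto
  have "card CC \<le> card (S \<inter> CC)" using CC_props(4)[of "S \<inter> CC"] ne cl assms(1) by auto
  moreover have "finite CC" using CC_props(1) finite_subset by blast
  ultimately have "S \<inter> CC = CC" by (intro card_seteq) auto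
  thus ?thesis by blast
qed

lemma reach_CC: assumes "i < N" "c \<in> CC" shows "reach N U i c"
proof -
  have r: "RS N U i \<subseteq> {..<N}" "i \<in> RS N U i" "closedS U (RS N U i)" using RS_props[OF sp assms(1)] by auto
  have "CC \<subseteq> RS N U i" by (rule CC_sub) (use r in auto)
  thus ?thesis using assms(2) by (auto simp: RS_def[OF sp])
qed

lemma CC_big: "N < 2 * card CC" using H CC_props by blast

lemma scc_CC: "is_scc N U CC"
proof -
  have m: "\<forall>i\<in>CC. \<forall>j\<in>CC. reach N U i j \<and> reach N U j i"
  proof (intro ballI conjI)
    fix i j assume "i \<in> CC" "j \<in> CC"
    moreover have "i < N" "j < N" using CC_props(1) \<open>i \<in> CC\<close> \<open>j \<in> CC\<close> by auto
    ultimately show "reach N U i j" "reach N U j i" using reach_CC by auto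
  qed
  have mx: "D = CC" if D: "D \<subseteq> {..<N}" "CC \<subseteq> D" "\<forall>i\<in>D. \<forall>j\<in>D. reach N U i j \<and> reach N U j i" for D
  proof -
    obtain c where c: "c \<in> CC" using CC_props(2) by blast
    have "D \<subseteq> CC"
    proof
      fix d assume d: "d \<in> D"
      have "c \<in> D" using c D(2) by blast
      hence "reach N U c d" using D(3) d by simp
      thus "d \<in> CC" using reach_closed[OF sp CC_props(3)] c by blast
    qed
    thus "D = CC" using D(2) by blast
  qed
  show ?thesis unfolding is_scc_def
  proof (intro conjI allI impI)
    show "CC \<noteq> {}" "CC \<subseteq> {..<N}" using CC_props(1,2) by auto
    show "\<forall>i\<in>CC. \<forall>j\<in>CC. reach N U i j \<and> reach N U j i" by (rule m)
    fix D assume "D \<subseteq> {..<N} \<and> CC \<subseteq> D \<and> (\<forall>i\<in>D. \<forall>j\<in>D. reach N U i j \<and> reach N U j i)"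
    thus "D = CC" using mx by simp
  qed
qed

lemma largest_CC: "largest_scc N U CC"
  unfolding largest_scc_def
proof (intro conjI scc_CC allI impI)
  fix D assume D: "is_scc N U D \<and> D \<noteq> CC"
  have dis: "D \<inter> CC = {}"
  proof (rule ccontr)
    assume "D \<inter> CC \<noteq> {}"
    then obtain x where x: "x \<in> D" "x \<in> CC" by blast
    have "D \<subseteq> CC"
    proof
      fix d assume "d \<in> D"
      hence "reach N U x d" using D x unfolding is_scc_def by blast
      thus "d \<in> CC" using reach_closed[OF sp CC_props(3)] x by blast
    qed
    moreover have "\<forall>i\<in>CC. \<forall>j\<in>CC. reach N U i j \<and> reach N U j i"
      using scc_CC unfolding is_scc_def by blast
    moreover have mx: "\<And>D'. D' \<subseteq> {..<N} \<and> D \<subseteq> D' \<and> (\<forall>i\<in>D'. \<forall>j\<in>D'. reach N U i j \<and> reach N U j i) \<Longrightarrow> D' = D"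
      using D unfolding is_scc_def by blast
    ultimately have "CC = D" using CC_props(1) by (intro mx) simp
    thus False using D by blast
  qed
  have DN: "D \<subseteq> {..<N}" using D unfolding is_scc_def by blast
  have "card (D \<union> CC) \<le> N" using DN CC_props(1) by (metis card_lessThan card_mono finite_lessThan Un_least)
  moreover have "card (D \<union> CC) = card D + card CC"
    using dis DN CC_props(1) finite_subset by (intro card_Un_disjoint) blast+
  ultimately show "card D < card CC" using CC_big by linarith
qed

abbreviation "C \<equiv> CC"
lemmas Cp = CC_props
lemmas Csub = CC_sub

lemma stat_unfold:
  assumes "stationary N U \<pi>"
  shows "\<And>i. \<pi> i \<ge> 0" "\<And>i. i \<ge> N \<Longrightarrow> \<pi> i = 0" "(\<Sum>i<N. \<pi> i) = 1"
    "\<And>j. j < N \<Longrightarrow> (\<Sum>i<N. \<pi> i * trans U i j) = \<pi> j"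
  using assms unfolding stationary_def by auto

lemma stat_zero:
  assumes st: "stationary N U \<pi>" and iC: "i \<notin> C"
  shows "\<pi> i = 0"
proof -
  note nn = stat_unfold(1)[OF st] and z = stat_unfold(2)[OF st] and eq = stat_unfold(4)[OF st]
  define T where "T = {..<N} - C"
  have CN: "C \<subseteq> {..<N}" using Cp by simp
  have fT: "finite T" unfolding T_def by simp
  define s where "s i = (\<Sum>j\<in>T. trans U i j)" for i
  have s_eq: "s i = (if fst (U i) \<in> T then 1/2 else 0) + (if snd (U i) \<in> T then 1/2 else 0)" for i
    unfolding s_def using fT by (rule sum_trans)
  have sC: "s i = 0" if "i \<in> C" for i
  proof -
    have "fst (U i) \<in> C" "snd (U i) \<in> C" using Cp(3) that unfolding closedS_def by auto
    thus ?thesis unfolding s_eq T_def by simp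
  qed
  have sle: "s i \<le> 1" for i unfolding s_eq by simp
  have "(\<Sum>j\<in>T. \<pi> j) = (\<Sum>j\<in>T. \<Sum>i<N. \<pi> i * trans U i j)"
    using eq unfolding T_def by (intro sum.cong) auto
  also have "\<dots> = (\<Sum>i<N. \<Sum>j\<in>T. \<pi> i * trans U i j)" by (rule sum.swap)
  also have "\<dots> = (\<Sum>i<N. \<pi> i * s i)" unfolding s_def by (simp add: sum_distrib_left)
  also have "\<dots> = (\<Sum>i\<in>T. \<pi> i * s i) + (\<Sum>i\<in>C. \<pi> i * s i)"
    unfolding T_def using CN by (intro sum.subset_diff) auto
  also have "(\<Sum>i\<in>C. \<pi> i * s i) = 0" using sC by simp
  finally have "(\<Sum>i\<in>T. \<pi> i * (1 - s i)) = 0"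
    by (simp add: algebra_simps sum_subtractf)
  moreover have "\<forall>i\<in>T. 0 \<le> \<pi> i * (1 - s i)" using nn sle by simp
  ultimately have zero: "\<forall>i\<in>T. \<pi> i * (1 - s i) = 0" using sum_nonneg_eq_0_iff[OF fT, of "\<lambda>i. \<pi> i * (1 - s i)"] by simp
  define Z where "Z = {i\<in>T. \<pi> i > 0}"
  have Zcl: "closedS U Z" unfolding closedS_def
  proof
    fix i assume iZ: "i \<in> Z"
    hence iT: "i \<in> T" and pi: "\<pi> i > 0" unfolding Z_def by auto
    have "s i = 1" using zero iT pi by auto
    hence inT: "fst (U i) \<in> T" "snd (U i) \<in> T" unfolding s_eq by (auto split: if_splits)
    have "i < N" using iT unfolding T_def by simp
    hence "i \<in> {i. i < N \<and> \<pi> i > 0}" using pi by simp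
    moreover have "\<forall>k\<in>{i. i < N \<and> \<pi> i > 0}. fst (U k) \<in> {i. i < N \<and> \<pi> i > 0} \<and> snd (U k) \<in> {i. i < N \<and> \<pi> i > 0}"
      using supp_closed[OF sp nn eq] unfolding closedS_def .
    ultimately have "fst (U i) \<in> {i. i < N \<and> \<pi> i > 0} \<and> snd (U i) \<in> {i. i < N \<and> \<pi> i > 0}"
      by (rule bspec[rotated])
    thus "fst (U i) \<in> Z \<and> snd (U i) \<in> Z" using inT unfolding Z_def by auto
  qed
  have "Z = {}"
  proof (rule ccontr)
    assume ne: "Z \<noteq> {}"
    have ZN: "Z \<subseteq> {..<N}" unfolding Z_def T_def by auto
    have "C \<subseteq> Z" using Csub[OF ZN ne Zcl] .
    moreover have "Z \<inter> C = {}" unfolding Z_def T_def by auto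
    ultimately have "C = {}" by auto
    thus False using Cp(2) by simp
  qed
  show ?thesis
  proof (cases "i < N")
    case True
    hence "i \<in> T" using iC unfolding T_def by simp
    hence "\<not> \<pi> i > 0" using \<open>Z = {}\<close> unfolding Z_def by auto
    thus ?thesis using nn[of i] by simp
  next
    case False thus ?thesis using z by simp
  qed
qed

lemma stat_pos:
  assumes st: "stationary N U \<pi>" and iC: "i \<in> C"
  shows "\<pi> i > 0"
proof -
  note nn = stat_unfold(1)[OF st] and eq = stat_unfold(4)[OF st] and s1 = stat_unfold(3)[OF st]
  let ?P = "{i. i < N \<and> \<pi> i > 0}"
  have cl: "closedS U ?P" using supp_closed[OF sp nn eq] .
  have ne: "?P \<noteq> {}"
  proof
    assume "?P = {}"
    have "\<forall>i<N. \<pi> i = 0"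
    proof (intro allI impI)
      fix i assume i: "i < N"
      have "i \<notin> ?P" using \<open>?P = {}\<close> by simp
      thus "\<pi> i = 0" using nn[of i] i by simp
    qed
    hence "(\<Sum>i<N. \<pi> i) = 0" by simp
    thus False using s1 by simp
  qed
  have "C \<subseteq> ?P" using Csub[OF _ ne cl] by auto
  thus ?thesis using iC by auto
qed

lemma stat_uniq:
  assumes st1: "stationary N U \<pi>" and st2: "stationary N U \<sigma>"
  shows "\<pi> = \<sigma>"
proof -
  note nn1 = stat_unfold(1)[OF st1] and z1 = stat_unfold(2)[OF st1] and s1 = stat_unfold(3)[OF st1]
    and eq1 = stat_unfold(4)[OF st1]
  note nn2 = stat_unfold(1)[OF st2] and z2 = stat_unfold(2)[OF st2] and s2 = stat_unfold(3)[OF st2]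
    and eq2 = stat_unfold(4)[OF st2]
  have fC: "finite C" using Cp(1) finite_subset by blast
  define t where "t = Min ((\<lambda>i. \<pi> i / \<sigma> i) ` C)"
  have "t \<in> (\<lambda>i. \<pi> i / \<sigma> i) ` C" unfolding t_def using fC Cp(2) by (intro Min_in) auto
  then obtain i0 where i0: "i0 \<in> C" "t = \<pi> i0 / \<sigma> i0" by auto
  have tle: "t \<le> \<pi> i / \<sigma> i" if "i \<in> C" for i unfolding t_def using fC that by (intro Min_le) auto
  define \<rho> where "\<rho> i = \<pi> i - t * \<sigma> i" for i
  have rnn: "\<rho> i \<ge> 0" for i
  proof (cases "i \<in> C")
    case True
    have "\<sigma> i > 0" using stat_pos[OF st2 True] .
    thus ?thesis using tle[OF True] unfolding \<rho>_def by (simp add: le_divide_eq)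
  next
    case False thus ?thesis unfolding \<rho>_def using stat_zero[OF st1 False] stat_zero[OF st2 False] by simp
  qed
  have req: "(\<Sum>i<N. \<rho> i * trans U i j) = \<rho> j" if j: "j < N" for j
  proof -
    have "(\<Sum>i<N. \<rho> i * trans U i j) = (\<Sum>i<N. \<pi> i * trans U i j) - t * (\<Sum>i<N. \<sigma> i * trans U i j)"
      unfolding \<rho>_def by (simp add: algebra_simps sum_subtractf sum_distrib_left)
    thus ?thesis using eq1[OF j] eq2[OF j] unfolding \<rho>_def by simp
  qed
  have r0: "\<rho> i0 = 0" unfolding \<rho>_def i0(2) using stat_pos[OF st2 i0(1)] by simp
  let ?P = "{i. i < N \<and> \<rho> i > 0}"
  have cl: "closedS U ?P" using supp_closed[OF sp rnn req] .
  have "?P = {}"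
  proof (rule ccontr)
    assume ne: "?P \<noteq> {}"
    have "C \<subseteq> ?P" using Csub[OF _ ne cl] by auto
    thus False using i0(1) r0 by auto
  qed
  hence rz: "\<rho> i = 0" if "i < N" for i using rnn[of i] that by (auto simp: less_eq_real_def)
  have pe: "\<pi> i = t * \<sigma> i" if "i < N" for i using rz[OF that] unfolding \<rho>_def by simp
  have "1 = (\<Sum>i<N. \<pi> i)" using s1 by simp
  also have "\<dots> = t * (\<Sum>i<N. \<sigma> i)" using pe by (simp add: sum_distrib_left)
  finally have t1: "t = 1" using s2 by simp
  show ?thesis
  proof
    fix i show "\<pi> i = \<sigma> i"
      using pe[of i] t1 z1[of i] z2[of i] by (cases "i < N") auto
  qed
qed

lemma stat_exists: "\<exists>\<pi>. stationary N U \<pi>"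
proof -
  have "\<exists>x. (\<exists>i<N. x i \<noteq> 0) \<and> (\<forall>j<N. (\<Sum>i<N. x i * trans U i j) = x j)"
    by (rule kernel_exists[OF Npos]) (rule rows1[OF sp])
  then obtain x where xnz: "\<exists>i<N. x i \<noteq> 0" and xeq: "\<forall>j<N. (\<Sum>i<N. x i * trans U i j) = x j"
    by blast
  define a where "a i = \<bar>x i\<bar>" for i
  have ale: "a j \<le> (\<Sum>i<N. a i * trans U i j)" if "j < N" for j
  proof -
    have "a j = \<bar>\<Sum>i<N. x i * trans U i j\<bar>" using xeq that unfolding a_def by simp
    also have "\<dots> \<le> (\<Sum>i<N. \<bar>x i * trans U i j\<bar>)" by (rule sum_abs)
    also have "\<dots> = (\<Sum>i<N. a i * trans U i j)" unfolding a_def using trans_nonneg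
      by (intro sum.cong) (auto simp: abs_mult)
    finally show ?thesis .
  qed
  define d where "d j = (\<Sum>i<N. a i * trans U i j) - a j" for j
  have dnn: "\<forall>j\<in>{..<N}. 0 \<le> d j" using ale unfolding d_def by simp
  have "(\<Sum>j<N. d j) = (\<Sum>j<N. \<Sum>i<N. a i * trans U i j) - (\<Sum>j<N. a j)"
    unfolding d_def by (simp add: sum_subtractf)
  also have "(\<Sum>j<N. \<Sum>i<N. a i * trans U i j) = (\<Sum>i<N. a i * (\<Sum>j<N. trans U i j))"
    by (subst sum.swap) (simp add: sum_distrib_left)
  also have "\<dots> = (\<Sum>i<N. a i)" using rows1[OF sp] by simp
  finally have "(\<Sum>j<N. d j) = 0" by simp
  hence dz: "\<forall>j\<in>{..<N}. d j = 0" using sum_nonneg_eq_0_iff[of "{..<N}" d] dnn by simp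
  define W where "W = (\<Sum>i<N. a i)"
  obtain i1 where i1: "i1 < N" "x i1 \<noteq> 0" using xnz by blast
  have "a i1 \<le> W" unfolding W_def a_def using i1 by (intro member_le_sum) auto
  moreover have "a i1 > 0" using i1 unfolding a_def by simp
  ultimately have Wp: "W > 0" by simp
  define \<pi> where "\<pi> i = (if i < N then a i / W else 0)" for i
  have "stationary N U \<pi>" unfolding stationary_def
  proof (intro conjI allI impI)
    fix i show "0 \<le> \<pi> i" unfolding \<pi>_def a_def using Wp by simp
  next
    fix i assume "N \<le> i" thus "\<pi> i = 0" unfolding \<pi>_def by simp
  next
    have "(\<Sum>i<N. \<pi> i) = (\<Sum>i<N. a i / W)" unfolding \<pi>_def by simp
    also have "\<dots> = 1" using Wp unfolding W_def by (simp add: sum_divide_distrib[symmetric])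
    finally show "(\<Sum>i<N. \<pi> i) = 1" .
  next
    fix j assume j: "j < N"
    have "(\<Sum>i<N. \<pi> i * trans U i j) = (\<Sum>i<N. a i * trans U i j) / W"
      unfolding \<pi>_def by (simp add: sum_divide_distrib)
    also have "\<dots> = a j / W" using dz j unfolding d_def by simp
    finally show "(\<Sum>i<N. \<pi> i * trans U i j) = \<pi> j" unfolding \<pi>_def using j by simp
  qed
  thus ?thesis by blast
qed

lemma good: "U \<in> good_event N"
  unfolding good_event_def
proof (intro CollectI conjI)
  show "\<exists>!\<pi>. stationary N U \<pi>" using stat_exists stat_uniq by blast
  show "\<exists>Ca. largest_scc N U Ca \<and> (\<forall>\<pi>. stationary N U \<pi> \<longrightarrow> (\<forall>i<N. \<pi> i \<noteq> 0 \<longrightarrow> i \<in> Ca))"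
  proof (intro exI[of _ CC] conjI largest_CC allI impI)
    fix \<pi> i assume st: "stationary N U \<pi>" and "i < N" "\<pi> i \<noteq> 0"
    show "i \<in> CC"
    proof (rule ccontr)
      assume "i \<notin> CC"
      hence "\<pi> i = 0" by (rule stat_zero[OF st])
      thus False using \<open>\<pi> i \<noteq> 0\<close> by simp
    qed
  qed
qed

end




lemma good_lower:
  assumes N: "N \<ge> 7"
  shows "1 - (300 / real N + 36 / sqrt (real N)) \<le> measure_pmf.prob (WCM N) (good_event N)"
proof -
  have Np: "N > 0" using N by simp
  have sub: "wcm_space N - bad N \<subseteq> wcm_space N \<inter> good_event N"
  proof
    fix U assume U: "U \<in> wcm_space N - bad N"
    have H: "N < 2 * card S" if "S \<subseteq> {..<N}" "S \<noteq> {}" "closedS U S" for S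
    proof -
      have "U \<notin> bad N" using U by simp
      hence "\<not> (S \<subseteq> {..<N} \<and> S \<noteq> {} \<and> 2 * card S \<le> N \<and> closedS U S)"
        unfolding bad_def by blast
      thus ?thesis using that by linarith
    qed
    have sp: "U \<in> wcm_space N" using U by simp
    have "U \<in> good_event N" using good[of U N] sp H Np by blast
    thus "U \<in> wcm_space N \<inter> good_event N" using U by simp
  qed
  have fin: "finite (wcm_space N)" by (rule space_fin)
  have cs: "card (wcm_space N) > 0" using fin space_ne by (simp add: card_gt_0_iff)
  have c1: "card (wcm_space N - bad N) \<le> card (wcm_space N \<inter> good_event N)"
    using sub fin by (intro card_mono) auto
  have c2: "card (wcm_space N - bad N) + card (wcm_space N \<inter> bad N) = card (wcm_space N)"
  proof -
    have "wcm_space N = (wcm_space N - bad N) \<union> (wcm_space N \<inter> bad N)" by blast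
    moreover have "card ((wcm_space N - bad N) \<union> (wcm_space N \<inter> bad N)) = card (wcm_space N - bad N) + card (wcm_space N \<inter> bad N)"
      using fin by (intro card_Un_disjoint) auto
    ultimately show ?thesis by simp
  qed
  have "real (card (wcm_space N)) - real (card (wcm_space N \<inter> bad N)) \<le> real (card (wcm_space N \<inter> good_event N))"
  proof -
    have "real (card (wcm_space N - bad N)) + real (card (wcm_space N \<inter> bad N)) = real (card (wcm_space N))"
      using c2 by (metis of_nat_add)
    moreover have "real (card (wcm_space N - bad N)) \<le> real (card (wcm_space N \<inter> good_event N))"
      using c1 by simp
    ultimately show ?thesis by linarith
  qed
  hence "(real (card (wcm_space N)) - real (card (wcm_space N \<inter> bad N))) / real (card (wcm_space N))
     \<le> real (card (wcm_space N \<inter> good_event N)) / real (card (wcm_space N))"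
    by (rule divide_right_mono) simp
  hence "1 - measure_pmf.prob (WCM N) (bad N) \<le> measure_pmf.prob (WCM N) (good_event N)"
    unfolding prob_WCM using cs by (simp add: diff_divide_distrib)
  moreover have "measure_pmf.prob (WCM N) (bad N) \<le> 300 / real N + 36 / sqrt (real N)"
    using bad_bound[OF Np] sum_aa_bound[OF N] by linarith
  ultimately show ?thesis by linarith
qed

theorem corollary3p2:
  shows "(\<lambda>N. measure_pmf.prob (WCM N) (good_event N)) \<longlonglongrightarrow> 1"
proof (rule tendsto_sandwich)
  show "\<forall>\<^sub>F N in sequentially. 1 - (300 / real N + 36 / sqrt (real N)) \<le> measure_pmf.prob (WCM N) (good_event N)"
    using eventually_ge_at_top[of 7] by (rule eventually_mono) (rule good_lower)
  show "\<forall>\<^sub>F N in sequentially. measure_pmf.prob (WCM N) (good_event N) \<le> 1"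
    by (simp add: measure_pmf.prob_le_1)
  show "(\<lambda>N. 1 - (300 / real N + 36 / sqrt (real N))) \<longlonglongrightarrow> 1"
    using tendsto_diff[OF tendsto_const[of 1] bound_lim] by simp
  show "(\<lambda>N. 1::real) \<longlonglongrightarrow> 1" by simp
qed


end
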